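(* For every integer $n\geq 3$, the $n$-fan $F_n=P_{n+1}\lor K_1$ satisfies $\eta(F_n)=2$.
   Context: All graphs are finite, simple and undirected. $P_{n+1}$ is the path with $n+1$ vertices (length $n$), $K_1$ is the graph with one vertex, and $G_1\lor G_2$ (join) is the graph on $V(G_1)\cup V(G_2)$ with edges $E(G_1)\cup E(G_2)\cup\{(u,v):u\in V(G_1),v\in V(G_2)\}$. For a vertex $v$, $N(v)$ is its set of neighbours. For a positive integer $k$, $[k]=\{1,\dots,k\}$. For a labeling $f:V(G)\to[k]$ and $S\subseteq V(G)$, $f(S)=\sum_{u\in S}f(u)$. A labeling $f:V(G)\to[k]$ is an additive $k$-coloring if $f(N(u))\neq f(N(v))$ for every edge $(u,v)$ of $G$. The additive chromatic number $\eta(G)$ is the least $k$ for which $G$ has an additive $k$-coloring. *)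

theory Defs
  imports Main
begin

text \<open>A finite simple graph is given by a vertex set V and a symmetric,
irreflexive edge relation E (only the edges between vertices of V matter).\<close>

definition nbhd :: "'a set \<Rightarrow> ('a \<Rightarrow> 'a \<Rightarrow> bool) \<Rightarrow> 'a \<Rightarrow> 'a set" where
  "nbhd V E u = {v \<in> V. E u v}"

definition additive_coloring ::
  "'a set \<Rightarrow> ('a \<Rightarrow> 'a \<Rightarrow> bool) \<Rightarrow> nat \<Rightarrow> ('a \<Rightarrow> nat) \<Rightarrow> bool" where
  "additive_coloring V E k f \<longleftrightarrow>
     (\<forall>v\<in>V. f v \<in> {1..k}) \<and>
     (\<forall>u\<in>V. \<forall>v\<in>V. E u v \<longrightarrow> sum f (nbhd V E u) \<noteq> sum f (nbhd V E v))"

definition eta :: "'a set \<Rightarrow> ('a \<Rightarrow> 'a \<Rightarrow> bool) \<Rightarrow> nat" where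
  "eta V E = (LEAST k. k \<ge> 1 \<and> (\<exists>f. additive_coloring V E k f))"

definition path_edge :: "nat \<Rightarrow> nat \<Rightarrow> nat \<Rightarrow> bool" where
  "path_edge n u v \<longleftrightarrow> u \<le> n \<and> v \<le> n \<and> (v = u + 1 \<or> u = v + 1)"

definition join_V :: "'a set \<Rightarrow> 'b set \<Rightarrow> ('a + 'b) set" where
  "join_V V1 V2 = Inl ` V1 \<union> Inr ` V2"

fun join_E :: "('a \<Rightarrow> 'a \<Rightarrow> bool) \<Rightarrow> ('b \<Rightarrow> 'b \<Rightarrow> bool) \<Rightarrow> ('a + 'b) \<Rightarrow> ('a + 'b) \<Rightarrow> bool" where
  "join_E E1 E2 (Inl a) (Inl b) = E1 a b"
| "join_E E1 E2 (Inr a) (Inr b) = E2 a b"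
| "join_E E1 E2 (Inl a) (Inr b) = True"
| "join_E E1 E2 (Inr a) (Inl b) = True"

definition fan_V :: "nat \<Rightarrow> (nat + unit) set" where
  "fan_V n = join_V {0..n} {()}"

definition fan_E :: "nat \<Rightarrow> (nat + unit) \<Rightarrow> (nat + unit) \<Rightarrow> bool" where
  "fan_E n = join_E (path_edge n) (\<lambda>_ _. False)"

end

theory Submission
  imports Defs
begin

lemma nb_Inl:
  assumes "i \<le> n" "0 < n"
  shows "nbhd (fan_V n) (fan_E n) (Inl i) =
     insert (Inr ()) (Inl ` ((if 0 < i then {i - 1} else {}) \<union> (if i < n then {Suc i} else {})))"
  using assms
  by (auto simp: nbhd_def fan_V_def fan_E_def join_V_def path_edge_def image_iff split: if_splits)

lemma sum_Inl:
  assumes "i \<le> n" "0 < n"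
  shows "sum f (nbhd (fan_V n) (fan_E n) (Inl i)) =
     f (Inr ()) + (if 0 < i then f (Inl (i - 1)) else 0) + (if i < n then f (Inl (Suc i)) else 0)"
  using assms by (auto simp: nb_Inl add_ac)

lemma nb_Inr:
  "nbhd (fan_V n) (fan_E n) (Inr u) = Inl ` {0..n}"
  by (auto simp: nbhd_def fan_V_def fan_E_def join_V_def)

lemma sum_Inr:
  "sum f (nbhd (fan_V n) (fan_E n) (Inr u)) = (\<Sum>j\<in>{0..n}. f (Inl j))"
  by (simp add: nb_Inr sum.reindex)

definition g :: "nat \<Rightarrow> nat \<Rightarrow> nat" where
  "g n i = (if odd n \<and> i = n - 1 then 1 else if even i then 2 else 1)"

definition P :: "nat \<Rightarrow> nat \<Rightarrow> nat" where
  "P n i = (if 0 < i then g n (i - 1) else 0) + (if i < n then g n (Suc i) else 0)"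

lemma P_neq: assumes "n \<ge> 3" "i < n" shows "P n i \<noteq> P n (Suc i)"
proof (cases i)
  case 0 then show ?thesis using assms by (auto simp: P_def g_def)
next
  case (Suc k)
  then show ?thesis using assms
    by (cases "Suc (Suc k) < n") (auto simp: P_def g_def split: if_splits; presburger)+
qed

lemma g_ge: "1 \<le> g n i" "g n i \<le> 2" by (auto simp: g_def)

lemma P_le: "P n i \<le> 4"
  using g_ge[of n] unfolding P_def by (smt (verit) add_mono_thms_linordered_semiring(1) le_zero_eq nat_le_linear numeral_Bit0)

lemma hub_neq: assumes "n \<ge> 3" "i \<le> n" shows "(\<Sum>j=0..n. g n j) \<noteq> Suc (P n i)"
proof -
  consider "n = 3" | "n = 4" | "n \<ge> 5" using assms by linarith
  then show ?thesis
  proof cases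
    case 1
    then show ?thesis using assms
      by (simp add: g_def P_def numeral_eq_Suc atLeast0_atMost_Suc le_Suc_eq; elim disjE; simp)
  next
    case 2
    then show ?thesis using assms
      by (simp add: g_def P_def numeral_eq_Suc atLeast0_atMost_Suc le_Suc_eq; elim disjE; simp)
  next
    case 3
    have "(\<Sum>j=0..n. (1::nat)) \<le> (\<Sum>j=0..n. g n j)" by (rule sum_mono) (metis g_ge(1))
    then have "n + 1 \<le> (\<Sum>j=0..n. g n j)" by simp
    then show ?thesis using P_le[of n i] 3 by linarith
  qed
qed

definition col :: "nat \<Rightarrow> nat + unit \<Rightarrow> nat" where
  "col n = case_sum (g n) (\<lambda>_. 1)"

lemma col_Inl: assumes "n \<ge> 3" "i \<le> n"
  shows "sum (col n) (nbhd (fan_V n) (fan_E n) (Inl i)) = Suc (P n i)"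
  using assms by (simp add: sum_Inl col_def P_def)

lemma col_Inr: "sum (col n) (nbhd (fan_V n) (fan_E n) (Inr u)) = (\<Sum>j=0..n. g n j)"
  by (simp add: sum_Inr col_def)

lemma col_ok: assumes "n \<ge> 3" shows "additive_coloring (fan_V n) (fan_E n) 2 (col n)"
  unfolding additive_coloring_def
proof (intro conjI ballI impI)
  fix v assume "v \<in> fan_V n" then show "col n v \<in> {1..2}"
    using g_ge by (cases v) (auto simp: col_def)
next
  fix u v assume u: "u \<in> fan_V n" and v: "v \<in> fan_V n" and e: "fan_E n u v"
  show "sum (col n) (nbhd (fan_V n) (fan_E n) u) \<noteq> sum (col n) (nbhd (fan_V n) (fan_E n) v)"
  proof (cases u)
    case (Inl i)
    then have i: "i \<le> n" using u by (auto simp: fan_V_def join_V_def)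
    show ?thesis
    proof (cases v)
      case (Inl j)
      then have j: "j \<le> n" using v by (auto simp: fan_V_def join_V_def)
      from e Inl \<open>u = Inl i\<close> have "j = Suc i \<or> i = Suc j" by (auto simp: fan_E_def path_edge_def)
      then show ?thesis using P_neq[OF assms, of i] P_neq[OF assms, of j] i j assms Inl \<open>u = Inl i\<close>
        by (auto simp: col_Inl)
    next
      case (Inr w)
      then show ?thesis using hub_neq[OF assms i] i assms \<open>u = Inl i\<close> by (simp add: col_Inl col_Inr)
    qed
  next
    case (Inr w)
    show ?thesis
    proof (cases v)
      case (Inl j)
      then have j: "j \<le> n" using v by (auto simp: fan_V_def join_V_def)
      show ?thesis using hub_neq[OF assms j] j assms Inl Inr by (simp add: col_Inl col_Inr)
    next
      case (Inr w')
      then show ?thesis using e \<open>u = Inr w\<close> by (simp add: fan_E_def)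
    qed
  qed
qed

lemma not_one: assumes "n \<ge> 3" shows "\<not> additive_coloring (fan_V n) (fan_E n) 1 f"
proof
  assume a: "additive_coloring (fan_V n) (fan_E n) 1 f"
  have one: "\<And>v. v \<in> fan_V n \<Longrightarrow> f v = 1" using a by (auto simp: additive_coloring_def)
  have V: "Inl i \<in> fan_V n" if "i \<le> n" for i using that by (auto simp: fan_V_def join_V_def)
  have R: "Inr () \<in> fan_V n" by (auto simp: fan_V_def join_V_def)
  have E: "fan_E n (Inl 1) (Inl 2)" using assms by (simp add: fan_E_def path_edge_def)
  have s1: "sum f (nbhd (fan_V n) (fan_E n) (Inl 1)) = 3"
    using assms by (simp add: sum_Inl one V R)
  have s2: "sum f (nbhd (fan_V n) (fan_E n) (Inl 2)) = 3"
    using assms by (simp add: sum_Inl one V R)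
  show False using a E s1 s2 V[of 1] V[of 2] assms unfolding additive_coloring_def by fastforce
qed

theorem mainTheorem6:
  fixes n :: nat
  assumes "n \<ge> 3"
  shows "eta (fan_V n) (fan_E n) = 2"
  unfolding eta_def
proof (rule Least_equality)
  show "2 \<ge> (1::nat) \<and> (\<exists>f. additive_coloring (fan_V n) (fan_E n) 2 f)"
    using col_ok[OF assms] by auto
next
  fix k assume "1 \<le> k \<and> (\<exists>f. additive_coloring (fan_V n) (fan_E n) k f)"
  then show "2 \<le> k" using not_one[OF assms] by (cases "k = 1") auto
qed

end
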